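(* Let $n\ge2$ and $G=\mathbb{R}^n\setminus\overline{\mathbb{B}^n}$, where $\mathbb{B}^n$ is the open unit ball. Then $G$ is uniform and \[ \frac{\pi}{\log3}\le A_G\le\frac{4\pi}{\log3}. \]
   Context: For a domain $G\subsetneq\mathbb{R}^n$ let $d_G(x)=d(x,\partial G)$; $k_G(x,y)=\inf_\gamma\int_\gamma\frac{|dx|}{d_G(x)}$ over rectifiable curves $\gamma\subset G$ joining $x,y$ (quasihyperbolic distance); $j_G(x,y)=\log\left(1+\frac{|x-y|}{\min\{d_G(x),d_G(y)\}}\right)$; the uniformity constant is $A_G=\inf\{A\ge1: k_G\le A\,j_G\text{ on }G\times G\}$ (with $\inf\emptyset=+\infty$), and $G$ is uniform if $A_G<\infty$. *)

theory Defs
  imports "HOL-Analysis.Analysis"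
begin

definition bdist :: "'a::euclidean_space set \<Rightarrow> 'a \<Rightarrow> real" where
  "bdist G x = infdist x (frontier G)"

definition partitions01 :: "(nat \<times> (nat \<Rightarrow> real)) set" where
  "partitions01 = {(m, t). t 0 = 0 \<and> t m = 1 \<and> (\<forall>i<m. t i < t (Suc i))}"

definition curve_length :: "(real \<Rightarrow> 'a::euclidean_space) \<Rightarrow> ereal" where
  "curve_length \<gamma> = (SUP p\<in>partitions01.
      ereal (\<Sum>i<fst p. dist (\<gamma> (snd p (Suc i))) (\<gamma> (snd p i))))"

definition rectifiable_curve :: "(real \<Rightarrow> 'a::euclidean_space) \<Rightarrow> bool" where
  "rectifiable_curve \<gamma> \<longleftrightarrow> path \<gamma> \<and> curve_length \<gamma> < \<infinity>"

text \<open>Quasihyperbolic length: the line integral of 1/d_G with respect to arc length,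
  realised as the supremum of lower Riemann--Stieltjes sums.\<close>
definition qh_length :: "'a::euclidean_space set \<Rightarrow> (real \<Rightarrow> 'a) \<Rightarrow> ereal" where
  "qh_length G \<gamma> = (SUP p\<in>partitions01.
      ereal (\<Sum>i<fst p. dist (\<gamma> (snd p (Suc i))) (\<gamma> (snd p i)) *
        (INF s\<in>{snd p i..snd p (Suc i)}. 1 / bdist G (\<gamma> s))))"

definition qh_dist :: "'a::euclidean_space set \<Rightarrow> 'a \<Rightarrow> 'a \<Rightarrow> ereal" where
  "qh_dist G x y = (INF \<gamma>\<in>{\<gamma>. rectifiable_curve \<gamma> \<and> path_image \<gamma> \<subseteq> G \<and>
      pathstart \<gamma> = x \<and> pathfinish \<gamma> = y}. qh_length G \<gamma>)"

definition j_dist :: "'a::euclidean_space set \<Rightarrow> 'a \<Rightarrow> 'a \<Rightarrow> real" where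
  "j_dist G x y = ln (1 + dist x y / min (bdist G x) (bdist G y))"

text \<open>Uniformity constant A_G (infimum of the empty set is +infinity).\<close>
definition uniformity_const :: "'a::euclidean_space set \<Rightarrow> ereal" where
  "uniformity_const G = Inf (ereal ` {A::real. A \<ge> 1 \<and>
      (\<forall>x\<in>G. \<forall>y\<in>G. qh_dist G x y \<le> ereal (A * j_dist G x y))})"

definition uniform_domain :: "'a::euclidean_space set \<Rightarrow> bool" where
  "uniform_domain G \<longleftrightarrow> uniformity_const G < \<infinity>"

end

theory Submission
  imports Defs
begin


lemma bdist_ball:
  fixes z :: "'a::euclidean_space"
  assumes G: "G = - cball 0 1" and z: "1 \<le> norm z"
  shows "bdist G z = norm z - 1"
proof -
  have fr: "frontier G = sphere 0 1" using G by simp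
  have z0: "z \<noteq> 0" using z by auto
  have "infdist z (sphere 0 1) \<le> dist z (sgn z)"
    by (rule infdist_le) (simp add: z0 norm_sgn)
  also have "dist z (sgn z) = norm z - 1"
  proof -
    have "z - sgn z = (1 - 1/norm z) *\<^sub>R z" by (simp add: sgn_div_norm algebra_simps divide_inverse)
    then have "dist z (sgn z) = \<bar>1 - 1/norm z\<bar> * norm z" by (simp add: dist_norm)
    also have "\<dots> = norm z - 1" using z z0 by (simp add: abs_if field_simps)
    finally show ?thesis .
  qed
  finally have le: "infdist z (sphere 0 1) \<le> norm z - 1" .
  have ge: "norm z - 1 \<le> infdist z (sphere 0 1)"
  proof -
    have ne: "sphere (0::'a) 1 \<noteq> {}" by simp
    show ?thesis unfolding infdist_notempty[OF ne]
  proof (rule cINF_greatest)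
    show "sphere (0::'a) 1 \<noteq> {}" by simp
    fix p :: 'a assume "p \<in> sphere 0 1"
    then have "norm p = 1" by simp
    then show "norm z - 1 \<le> dist z p" using norm_triangle_ineq2[of z p] by (simp add: dist_norm)
  qed
  qed
  show ?thesis unfolding bdist_def fr using le ge by simp
qed

definition wlen :: "('a::euclidean_space \<Rightarrow> real) \<Rightarrow> (real \<Rightarrow> 'a) \<Rightarrow> real \<Rightarrow> real \<Rightarrow> real" where
  "wlen w g a b = dist (g b) (g a) * (INF s\<in>{a..b}. w (g s))"

definition wb :: "('a::euclidean_space \<Rightarrow> real) \<Rightarrow> (real \<Rightarrow> 'a) \<Rightarrow> (real \<Rightarrow> real) \<Rightarrow> bool" where
  "wb w g F \<longleftrightarrow> (\<forall>a b. 0 \<le> a \<longrightarrow> a \<le> b \<longrightarrow> b \<le> 1 \<longrightarrow> wlen w g a b \<le> F b - F a)"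

definition wbv :: "('a::euclidean_space \<Rightarrow> real) \<Rightarrow> (real \<Rightarrow> 'a) \<Rightarrow> real \<Rightarrow> bool" where
  "wbv w g V \<longleftrightarrow> (\<exists>F. wb w g F \<and> F 1 - F 0 = V)"

lemma part_mono:
  assumes "(m, t) \<in> partitions01" "i \<le> j" "j \<le> m"
  shows "t i \<le> t j"
  using assms(2,3)
proof (induction j)
  case 0 then show ?case by simp
next
  case (Suc j)
  show ?case
  proof (cases "i = Suc j")
    case False
    then have "t i \<le> t j" using Suc by simp
    also have "t j < t (Suc j)" using assms(1) Suc.prems by (simp add: partitions01_def)
    finally show ?thesis by simp
  qed simp
qed

lemma part_bounds:
  assumes "(m, t) \<in> partitions01" "i \<le> m"
  shows "0 \<le> t i" "t i \<le> 1"
  using part_mono[OF assms(1) _ assms(2), of 0] part_mono[OF assms(1) assms(2) order_refl]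
    assms(1) by (auto simp: partitions01_def)

lemma wb_sum:
  assumes "wb w g F" "(m, t) \<in> partitions01"
  shows "(\<Sum>i<m. wlen w g (t i) (t (Suc i))) \<le> F 1 - F 0"
proof -
  have "(\<Sum>i<m. wlen w g (t i) (t (Suc i))) \<le> (\<Sum>i<m. F (t (Suc i)) - F (t i))"
  proof (rule sum_mono)
    fix i assume "i \<in> {..<m}"
    then have "i < m" by simp
    then show "wlen w g (t i) (t (Suc i)) \<le> F (t (Suc i)) - F (t i)"
      using assms(1) part_bounds[OF assms(2), of i] part_bounds[OF assms(2), of "Suc i"]
        assms(2) unfolding wb_def partitions01_def by auto
  qed
  also have "\<dots> = F (t m) - F (t 0)" by (rule sum_lessThan_telescope)
  also have "\<dots> = F 1 - F 0" using assms(2) by (simp add: partitions01_def)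
  finally show ?thesis .
qed

lemma qh_length_le:
  assumes "wbv (\<lambda>z. 1 / bdist G z) g V"
  shows "qh_length G g \<le> ereal V"
proof -
  obtain F where F: "wb (\<lambda>z. 1 / bdist G z) g F" "F 1 - F 0 = V" using assms wbv_def by blast
  show ?thesis unfolding qh_length_def
  proof (rule SUP_least)
    fix p assume p: "p \<in> partitions01"
    obtain m t where mt: "p = (m, t)" by fastforce
    show "ereal (\<Sum>i<fst p. dist (g (snd p (Suc i))) (g (snd p i)) *
        (INF s\<in>{snd p i..snd p (Suc i)}. 1 / bdist G (g s))) \<le> ereal V"
      using wb_sum[OF F(1), of m t] p F(2) by (simp add: mt wlen_def)
  qed
qed

lemma curve_length_le:
  assumes "wbv (\<lambda>z. 1) g V"
  shows "curve_length g \<le> ereal V"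
proof -
  obtain F where F: "wb (\<lambda>z. 1) g F" "F 1 - F 0 = V" using assms wbv_def by blast
  show ?thesis unfolding curve_length_def
  proof (rule SUP_least)
    fix p assume p: "p \<in> partitions01"
    obtain m t where mt: "p = (m, t)" by fastforce
    have "(\<Sum>i<m. dist (g (t (Suc i))) (g (t i))) = (\<Sum>i<m. wlen (\<lambda>z. 1) g (t i) (t (Suc i)))"
    proof (rule sum.cong)
      fix i assume "i \<in> {..<m}"
      then have "t i < t (Suc i)" using p mt by (simp add: partitions01_def)
      then show "dist (g (t (Suc i))) (g (t i)) = wlen (\<lambda>z. 1) g (t i) (t (Suc i))"
        by (simp add: wlen_def)
    qed simp
    then show "ereal (\<Sum>i<fst p. dist (g (snd p (Suc i))) (g (snd p i))) \<le> ereal V"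
      using wb_sum[OF F(1), of m t] p F(2) by (simp add: mt)
  qed
qed

lemma INF_w_nonneg:
  fixes w :: "'a \<Rightarrow> real" and a b :: real
  assumes "\<And>z. 0 \<le> w z" "a \<le> b"
  shows "0 \<le> (INF s\<in>{a..b}. w (g s))"
  using assms by (intro cINF_greatest) auto

lemma INF_w_mono:
  fixes w :: "'a \<Rightarrow> real" and a b c d :: real
  assumes "\<And>z. 0 \<le> w z" "c \<le> d"
    and "\<And>s'. s' \<in> {c..d} \<Longrightarrow> \<exists>s\<in>{a..b}. g s = h s'"
  shows "(INF s\<in>{a..b}. w (g s)) \<le> (INF s\<in>{c..d}. w (h s))"
proof (rule cINF_mono)
  show "{c..d} \<noteq> {}" using assms(2) by simp
  show "bdd_below ((\<lambda>s. w (g s)) ` {a..b})" using assms(1) by (intro bdd_belowI[of _ 0]) auto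
  fix m assume "m \<in> {c..d}"
  then obtain s where "s \<in> {a..b}" "g s = h m" using assms(3) by blast
  then show "\<exists>n\<in>{a..b}. w (g n) \<le> w (h m)" by force
qed

lemma wb_join:
  assumes w: "\<And>z. 0 \<le> w z" and h1: "wb w g1 F1" and h2: "wb w g2 F2" and e: "g1 1 = g2 0"
  shows "wb w (g1 +++ g2) (\<lambda>t. if t \<le> 1/2 then F1 (2*t) else F1 1 + F2 (2*t-1) - F2 0)"
  unfolding wb_def
proof (intro allI impI)
  fix a b :: real assume ab: "0 \<le> a" "a \<le> b" "b \<le> 1"
  let ?g = "g1 +++ g2"
  let ?F = "(\<lambda>t. if t \<le> 1/2 then F1 (2*t) else F1 1 + F2 (2*t-1) - F2 0)"
  have I0: "0 \<le> (INF s\<in>{a..b}. w (?g s))" using INF_w_nonneg[OF w ab(2)] .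
  consider "b \<le> 1/2" | "1/2 < a" | "a \<le> 1/2" "1/2 < b" by linarith
  then show "wlen w ?g a b \<le> ?F b - ?F a"
  proof cases
    case 1
    have I: "(INF s\<in>{a..b}. w (?g s)) \<le> (INF s\<in>{2*a..2*b}. w (g1 s))"
    proof (rule INF_w_mono[OF w])
      fix s' assume s': "s' \<in> {2*a..2*b}"
      then show "\<exists>s\<in>{a..b}. ?g s = g1 s'"
        using 1 by (intro bexI[of _ "s'/2"]) (auto simp: joinpaths_def)
    qed (use ab in auto)
    have "wlen w ?g a b = dist (g1 (2*b)) (g1 (2*a)) * (INF s\<in>{a..b}. w (?g s))"
      using 1 ab by (simp add: wlen_def joinpaths_def)
    also have "\<dots> \<le> wlen w g1 (2*a) (2*b)"
      unfolding wlen_def by (rule mult_left_mono[OF I]) simp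
    also have "\<dots> \<le> F1 (2*b) - F1 (2*a)" using h1 ab 1 unfolding wb_def by auto
    finally show ?thesis using 1 ab by simp
  next
    case 2
    have I: "(INF s\<in>{a..b}. w (?g s)) \<le> (INF s\<in>{2*a-1..2*b-1}. w (g2 s))"
    proof (rule INF_w_mono[OF w])
      fix s' assume s': "s' \<in> {2*a-1..2*b-1}"
      then show "\<exists>s\<in>{a..b}. ?g s = g2 s'"
        using 2 by (intro bexI[of _ "(s'+1)/2"]) (auto simp: joinpaths_def add_divide_distrib)
    qed (use ab in auto)
    have "wlen w ?g a b = dist (g2 (2*b-1)) (g2 (2*a-1)) * (INF s\<in>{a..b}. w (?g s))"
      using 2 ab by (simp add: wlen_def joinpaths_def)
    also have "\<dots> \<le> wlen w g2 (2*a-1) (2*b-1)"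
      unfolding wlen_def by (rule mult_left_mono[OF I]) simp
    also have "\<dots> \<le> F2 (2*b-1) - F2 (2*a-1)" using h2 ab 2 unfolding wb_def by auto
    finally show ?thesis using 2 ab by simp
  next
    case 3
    have Ia: "(INF s\<in>{a..b}. w (?g s)) \<le> (INF s\<in>{2*a..1}. w (g1 s))"
    proof (rule INF_w_mono[OF w])
      fix s' assume s': "s' \<in> {2*a..1}"
      then show "\<exists>s\<in>{a..b}. ?g s = g1 s'"
        using 3 by (intro bexI[of _ "s'/2"]) (auto simp: joinpaths_def)
    qed (use 3 in auto)
    have Ib: "(INF s\<in>{a..b}. w (?g s)) \<le> (INF s\<in>{0..2*b-1}. w (g2 s))"
    proof (rule INF_w_mono[OF w])
      fix s' assume s': "s' \<in> {0..2*b-1}"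
      show "\<exists>s\<in>{a..b}. ?g s = g2 s'"
      proof (cases "s' = 0")
        case True
        then show ?thesis using 3 e by (intro bexI[of _ "1/2"]) (auto simp: joinpaths_def)
      next
        case False
        then show ?thesis using 3 s' by (intro bexI[of _ "(s'+1)/2"]) (auto simp: joinpaths_def add_divide_distrib)
      qed
    qed (use 3 in auto)
    have ga: "?g a = g1 (2*a)" using 3 by (simp add: joinpaths_def)
    have gb: "?g b = g2 (2*b-1)" using 3 by (simp add: joinpaths_def)
    have "wlen w ?g a b \<le> (dist (g2 (2*b-1)) (g2 0) + dist (g1 1) (g1 (2*a))) * (INF s\<in>{a..b}. w (?g s))"
      unfolding wlen_def ga gb
      by (rule mult_right_mono[OF _ I0]) (metis dist_triangle e)
    also have "\<dots> = dist (g2 (2*b-1)) (g2 0) * (INF s\<in>{a..b}. w (?g s)) + dist (g1 1) (g1 (2*a)) * (INF s\<in>{a..b}. w (?g s))"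
      by (simp add: algebra_simps)
    also have "\<dots> \<le> wlen w g2 0 (2*b-1) + wlen w g1 (2*a) 1"
      unfolding wlen_def by (intro add_mono mult_left_mono Ia Ib) auto
    also have "\<dots> \<le> (F2 (2*b-1) - F2 0) + (F1 1 - F1 (2*a))"
      using h1 h2 ab 3 unfolding wb_def by (intro add_mono) auto
    finally show ?thesis using 3 by simp
  qed
qed

lemma wbv_join:
  assumes w: "\<And>z. 0 \<le> w z" and h1: "wbv w g1 V1" and h2: "wbv w g2 V2" and e: "g1 1 = g2 0"
  shows "wbv w (g1 +++ g2) (V1 + V2)"
proof -
  obtain F1 where F1: "wb w g1 F1" "F1 1 - F1 0 = V1" using h1 wbv_def by blast
  obtain F2 where F2: "wb w g2 F2" "F2 1 - F2 0 = V2" using h2 wbv_def by blast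
  show ?thesis unfolding wbv_def
    by (rule exI, rule conjI, rule wb_join[OF w F1(1) F2(1) e]) (use F1 F2 in simp)
qed

lemma INF_le_at:
  fixes w :: "'a \<Rightarrow> real" and a b s :: real
  assumes "\<And>z. 0 \<le> w z" "s \<in> {a..b}"
  shows "(INF s\<in>{a..b}. w (g s)) \<le> w (g s)"
  using assms by (intro cINF_lower bdd_belowI[of _ 0]) auto

lemma ln_diff_ge:
  fixes P Q :: real
  assumes "1 < P" "P \<le> Q"
  shows "(Q - P) / (Q - 1) \<le> ln (Q - 1) - ln (P - 1)"
proof -
  have "ln ((P - 1) / (Q - 1)) \<le> (P - 1) / (Q - 1) - 1"
    using assms by (intro ln_le_minus_one) auto
  also have "\<dots> = - ((Q - P) / (Q - 1))" using assms by (simp add: field_simps)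
  finally show ?thesis using assms by (simp add: ln_div)
qed

lemma trig_chord:
  fixes A B :: real
  shows "(cos B - cos A)\<^sup>2 + (sin B - sin A)\<^sup>2 \<le> (B - A)\<^sup>2"
proof -
  have "(cos B - cos A)\<^sup>2 + (sin B - sin A)\<^sup>2 = 2 - 2 * cos (B - A)"
    by (simp add: cos_diff power2_eq_square algebra_simps)
  also have "cos (B - A) = 1 - 2 * (sin ((B - A)/2))\<^sup>2"
  proof -
    have e: "2 * ((B - A)/2) = B - A" by simp
    show ?thesis using cos_double_sin[of "(B-A)/2"] unfolding e .
  qed
  also have "2 - 2 * (1 - 2 * (sin ((B - A)/2))\<^sup>2) = 4 * (sin ((B - A)/2))\<^sup>2" by simp
  also have "\<dots> \<le> 4 * ((B - A)/2)\<^sup>2"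
    using abs_sin_x_le_abs_x[of "(B-A)/2"] abs_le_square_iff[of "sin ((B-A)/2)" "(B-A)/2"] by linarith
  also have "\<dots> = (B - A)\<^sup>2" by (simp add: power2_eq_square)
  finally show ?thesis .
qed

lemma norm_orth2:
  fixes u w :: "'a::euclidean_space"
  assumes "norm u = 1" "norm w = 1" "inner u w = 0"
  shows "(norm (x *\<^sub>R u + y *\<^sub>R w))\<^sup>2 = x\<^sup>2 + y\<^sup>2"
proof -
  have uu: "inner u u = 1" "inner w w = 1" "inner w u = 0"
    using assms by (simp_all add: power2_norm_eq_inner[symmetric] inner_commute)
  have "(norm (x *\<^sub>R u + y *\<^sub>R w))\<^sup>2 = inner (x *\<^sub>R u + y *\<^sub>R w) (x *\<^sub>R u + y *\<^sub>R w)"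
    by (simp add: power2_norm_eq_inner)
  also have "\<dots> = x*x*inner u u + x*y*inner u w + y*x*inner w u + y*y*inner w w"
    by (simp add: inner_add_left inner_add_right algebra_simps)
  finally show ?thesis using uu assms(3) by (simp add: power2_eq_square)
qed

definition radial :: "real \<Rightarrow> real \<Rightarrow> 'a::euclidean_space \<Rightarrow> real \<Rightarrow> 'a" where
  "radial p q u = (\<lambda>t. (p + t * (q - p)) *\<^sub>R u)"

definition circ_arc :: "real \<Rightarrow> real \<Rightarrow> 'a::euclidean_space \<Rightarrow> 'a \<Rightarrow> real \<Rightarrow> 'a" where
  "circ_arc R th u w = (\<lambda>t. R *\<^sub>R (cos (t * th) *\<^sub>R u + sin (t * th) *\<^sub>R w))"

lemma radial_rho:
  fixes p q t :: real
  assumes "1 < p" "1 < q" "0 \<le> t" "t \<le> 1"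
  shows "1 < p + t * (q - p)" "min p q \<le> p + t * (q - p)" "p + t * (q - p) \<le> max p q"
proof -
  have "p + t * (q - p) = (1 - t) * p + t * q" by (simp add: algebra_simps)
  moreover have "(1 - t) * p + t * q \<ge> (1 - t) * min p q + t * min p q"
    using assms by (intro add_mono mult_left_mono) auto
  moreover have "(1 - t) * p + t * q \<le> (1 - t) * max p q + t * max p q"
    using assms by (intro add_mono mult_left_mono) auto
  ultimately show "min p q \<le> p + t * (q - p)" "p + t * (q - p) \<le> max p q"
    by (simp_all add: algebra_simps)
  then show "1 < p + t * (q - p)" using assms by linarith
qed

lemma norm_radial:
  assumes "norm u = 1" "1 < p" "1 < q" "0 \<le> t" "t \<le> 1"
  shows "norm (radial p q u t) = p + t * (q - p)"
  using radial_rho[OF assms(2-5)] assms(1) by (simp add: radial_def)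

lemma radial_qh:
  fixes u :: "'a::euclidean_space"
  assumes G: "G = - cball 0 1" and u: "norm u = 1" and pq: "1 < p" "1 < q"
  shows "wbv (\<lambda>z. 1 / bdist G z) (radial p q u) \<bar>ln (q - 1) - ln (p - 1)\<bar>"
proof -
  let ?r = "\<lambda>t. p + t * (q - p)"
  define F where "F t = \<bar>ln (?r t - 1) - ln (p - 1)\<bar>" for t
  have w0: "\<And>z. 0 \<le> 1 / bdist G z" by (simp add: bdist_def infdist_nonneg)
  have bd: "bdist G (radial p q u t) = ?r t - 1" if "0 \<le> t" "t \<le> 1" for t
  proof -
    have n: "norm (radial p q u t) = ?r t" using norm_radial[OF u pq that] .
    have "1 < ?r t" using radial_rho[OF pq that] by simp
    then show ?thesis using bdist_ball[OF G, of "radial p q u t"] n by simp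
  qed
  have "wb (\<lambda>z. 1 / bdist G z) (radial p q u) F"
    unfolding wb_def
  proof (intro allI impI)
    fix a b :: real assume ab: "0 \<le> a" "a \<le> b" "b \<le> 1"
    have ra: "1 < ?r a" "min p q \<le> ?r a" "?r a \<le> max p q" using radial_rho[OF pq, of a] ab by auto
    have rb: "1 < ?r b" "min p q \<le> ?r b" "?r b \<le> max p q" using radial_rho[OF pq, of b] ab by auto
    have dist: "dist (radial p q u b) (radial p q u a) = \<bar>?r b - ?r a\<bar>"
      using u by (simp add: radial_def dist_norm scaleR_diff_left[symmetric])
    show "wlen (\<lambda>z. 1 / bdist G z) (radial p q u) a b \<le> F b - F a"
    proof (cases "p \<le> q")
      case True
      have mono: "?r a \<le> ?r b" using True ab by (simp add: mult_right_mono)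
      have "wlen (\<lambda>z. 1 / bdist G z) (radial p q u) a b \<le> \<bar>?r b - ?r a\<bar> * (1 / bdist G (radial p q u b))"
        unfolding wlen_def dist by (intro mult_left_mono INF_le_at[OF w0]) (use ab in auto)
      also have "\<dots> = (?r b - ?r a) / (?r b - 1)" using bd[of b] ab mono by simp
      also have "\<dots> \<le> ln (?r b - 1) - ln (?r a - 1)" by (rule ln_diff_ge) (use ra mono in auto)
      also have "\<dots> = F b - F a"
      proof -
        have "ln (p - 1) \<le> ln (?r a - 1)" "ln (p - 1) \<le> ln (?r b - 1)"
          using ra rb pq True by auto
        then show ?thesis by (simp add: F_def)
      qed
      finally show ?thesis .
    next
      case False
      have mono: "?r b \<le> ?r a" using False ab by (simp add: mult_right_mono_neg)
      have "wlen (\<lambda>z. 1 / bdist G z) (radial p q u) a b \<le> \<bar>?r b - ?r a\<bar> * (1 / bdist G (radial p q u a))"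
        unfolding wlen_def dist by (intro mult_left_mono INF_le_at[OF w0]) (use ab in auto)
      also have "\<dots> = (?r a - ?r b) / (?r a - 1)" using bd[of a] ab mono by simp
      also have "\<dots> \<le> ln (?r a - 1) - ln (?r b - 1)" by (rule ln_diff_ge) (use rb mono in auto)
      also have "\<dots> = F b - F a"
      proof -
        have "ln (?r a - 1) \<le> ln (p - 1)" "ln (?r b - 1) \<le> ln (p - 1)"
          using ra rb pq False by auto
        then show ?thesis by (simp add: F_def)
      qed
      finally show ?thesis .
    qed
  qed
  moreover have "F 1 - F 0 = \<bar>ln (q - 1) - ln (p - 1)\<bar>" by (simp add: F_def)
  ultimately show ?thesis unfolding wbv_def by blast
qed

lemma lipschitz_len:
  assumes L: "\<And>a b. 0 \<le> a \<Longrightarrow> a \<le> b \<Longrightarrow> b \<le> 1 \<Longrightarrow> dist (g b) (g a) \<le> L * (b - a)"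
  shows "wbv (\<lambda>z. 1) g L"
proof -
  have "wb (\<lambda>z. 1) g (\<lambda>t. L * t)"
    unfolding wb_def wlen_def
  proof (intro allI impI)
    fix a b :: real assume ab: "0 \<le> a" "a \<le> b" "b \<le> 1"
    have "(INF s\<in>{a..b}. (1::real)) = 1" using ab by simp
    then show "dist (g b) (g a) * (INF s\<in>{a..b}. 1) \<le> L * b - L * a"
      using L[OF ab] by (simp add: algebra_simps)
  qed
  then show ?thesis unfolding wbv_def by (intro exI[of _ "\<lambda>t. L * t"]) simp
qed

lemma radial_len:
  fixes u :: "'a::euclidean_space"
  assumes u: "norm u = 1"
  shows "wbv (\<lambda>z. 1) (radial p q u) \<bar>q - p\<bar>"
proof (rule lipschitz_len)
  fix a b :: real assume ab: "0 \<le> a" "a \<le> b" "b \<le> 1"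
  have "radial p q u b - radial p q u a = ((p + b*(q-p)) - (p + a*(q-p))) *\<^sub>R u"
    unfolding radial_def by (rule scaleR_left_diff_distrib[symmetric])
  also have "(p + b*(q-p)) - (p + a*(q-p)) = (b - a) * (q - p)" by (simp add: algebra_simps)
  finally have "dist (radial p q u b) (radial p q u a) = \<bar>(b - a) * (q - p)\<bar>"
    using u by (simp add: dist_norm)
  also have "\<dots> = \<bar>q - p\<bar> * (b - a)" using ab by (simp add: abs_mult)
  finally show "dist (radial p q u b) (radial p q u a) \<le> \<bar>q - p\<bar> * (b - a)" by simp
qed

lemma arc_norm:
  fixes u w :: "'a::euclidean_space"
  assumes "norm u = 1" "norm w = 1" "inner u w = 0" "0 \<le> R"
  shows "norm (circ_arc R th u w t) = R"
proof -
  have "(norm (cos (t*th) *\<^sub>R u + sin (t*th) *\<^sub>R w))\<^sup>2 = 1"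
    using norm_orth2[OF assms(1-3)] by simp
  then have "norm (cos (t*th) *\<^sub>R u + sin (t*th) *\<^sub>R w) = 1"
    using norm_ge_zero[of "cos (t*th) *\<^sub>R u + sin (t*th) *\<^sub>R w"] by (simp add: power2_eq_1_iff)
  then show ?thesis using assms(4) by (simp add: circ_arc_def)
qed

lemma arc_dist:
  fixes u w :: "'a::euclidean_space"
  assumes "norm u = 1" "norm w = 1" "inner u w = 0" "0 \<le> R" "0 \<le> th" "a \<le> b"
  shows "dist (circ_arc R th u w b) (circ_arc R th u w a) \<le> R * th * (b - a)"
proof -
  have eq: "circ_arc R th u w b - circ_arc R th u w a =
      R *\<^sub>R ((cos (b*th) - cos (a*th)) *\<^sub>R u + (sin (b*th) - sin (a*th)) *\<^sub>R w)"
    by (simp add: circ_arc_def algebra_simps scaleR_diff_left)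
  have "(norm ((cos (b*th) - cos (a*th)) *\<^sub>R u + (sin (b*th) - sin (a*th)) *\<^sub>R w))\<^sup>2 \<le> (b*th - a*th)\<^sup>2"
    using norm_orth2[OF assms(1-3)] trig_chord[of "b*th" "a*th"] by simp
  then have "norm ((cos (b*th) - cos (a*th)) *\<^sub>R u + (sin (b*th) - sin (a*th)) *\<^sub>R w) \<le> \<bar>b*th - a*th\<bar>"
    using power2_le_imp_le[of _ "\<bar>b*th - a*th\<bar>"] by simp
  also have "\<bar>b*th - a*th\<bar> = th * (b - a)"
  proof -
    have "a * th \<le> b * th" using assms by (simp add: mult_right_mono)
    then show ?thesis by (simp add: algebra_simps)
  qed
  finally have "norm ((cos (b*th) - cos (a*th)) *\<^sub>R u + (sin (b*th) - sin (a*th)) *\<^sub>R w) \<le> th * (b - a)" .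
  then show ?thesis unfolding dist_norm eq using assms(4) by (simp add: mult_left_mono mult.assoc)
qed

lemma arc_qh:
  fixes u w :: "'a::euclidean_space"
  assumes G: "G = - cball 0 1" and o: "norm u = 1" "norm w = 1" "inner u w = 0" and R: "1 < R" and th: "0 \<le> th"
  shows "wbv (\<lambda>z. 1 / bdist G z) (circ_arc R th u w) (R * th / (R - 1))"
proof -
  have w0: "\<And>z. 0 \<le> 1 / bdist G z" by (simp add: bdist_def infdist_nonneg)
  have bd: "\<And>t. bdist G (circ_arc R th u w t) = R - 1"
    using arc_norm[OF o] R by (subst bdist_ball[OF G]) auto
  have "wb (\<lambda>z. 1 / bdist G z) (circ_arc R th u w) (\<lambda>t. R * th / (R - 1) * t)"
    unfolding wb_def
  proof (intro allI impI)
    fix a b :: real assume ab: "0 \<le> a" "a \<le> b" "b \<le> 1"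
    have "wlen (\<lambda>z. 1 / bdist G z) (circ_arc R th u w) a b \<le> dist (circ_arc R th u w b) (circ_arc R th u w a) * (1 / (R - 1))"
      unfolding wlen_def using INF_le_at[OF w0, of a a b "circ_arc R th u w"] ab bd by (intro mult_left_mono) auto
    also have "\<dots> \<le> R * th * (b - a) * (1 / (R - 1))"
      by (rule mult_right_mono[OF arc_dist[OF o]]) (use R th ab in auto)
    finally show "wlen (\<lambda>z. 1 / bdist G z) (circ_arc R th u w) a b \<le> R * th / (R - 1) * b - R * th / (R - 1) * a"
      by (simp add: algebra_simps)
  qed
  then show ?thesis unfolding wbv_def by (intro exI[of _ "\<lambda>t. R * th / (R - 1) * t"]) simp
qed

lemma arc_len:
  fixes u w :: "'a::euclidean_space"
  assumes o: "norm u = 1" "norm w = 1" "inner u w = 0" and R: "0 \<le> R" and th: "0 \<le> th"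
  shows "wbv (\<lambda>z. 1) (circ_arc R th u w) (R * th)"
  by (rule lipschitz_len) (rule arc_dist[OF o R th])

lemma exists_w:
  fixes u v :: "'a::euclidean_space"
  assumes D: "DIM('a) \<ge> 2" and u: "norm u = 1" and v: "norm v = 1"
  shows "\<exists>w. norm w = 1 \<and> inner u w = 0 \<and>
    v = cos (arccos (inner u v)) *\<^sub>R u + sin (arccos (inner u v)) *\<^sub>R w"
proof -
  define c where "c = inner u v"
  have cb: "\<bar>c\<bar> \<le> 1" using Cauchy_Schwarz_ineq2[of u v] u v by (simp add: c_def)
  have cosc: "cos (arccos c) = c" using cb by (intro cos_arccos) auto
  have sinc: "sin (arccos c) = sqrt (1 - c\<^sup>2)" using cb by (rule sin_arccos_abs)
  define v' where "v' = v - c *\<^sub>R u"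
  have uu: "inner u u = 1" "inner v v = 1" using u v by (simp_all add: power2_norm_eq_inner[symmetric])
  have uv': "inner u v' = 0" by (simp add: v'_def inner_diff_right c_def uu)
  have "(norm v')\<^sup>2 = inner v' v'" by (simp add: power2_norm_eq_inner)
  also have "\<dots> = 1 - c\<^sup>2"
    by (simp add: v'_def inner_diff_left inner_diff_right uu inner_commute c_def power2_eq_square)
  finally have nv': "(norm v')\<^sup>2 = 1 - c\<^sup>2" .
  show ?thesis
  proof (cases "c\<^sup>2 < 1")
    case True
    define w where "w = (1 / sqrt (1 - c\<^sup>2)) *\<^sub>R v'"
    have sp: "0 < sqrt (1 - c\<^sup>2)" using True by simp
    have nn: "norm v' = sqrt (1 - c\<^sup>2)" using nv' by (metis norm_ge_zero real_sqrt_abs abs_of_nonneg real_sqrt_unique power2_eq_square)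
    have nw: "norm w = 1" using sp nn by (simp add: w_def)
    moreover have uw: "inner u w = 0" by (simp add: w_def uv')
    moreover have vr: "v = c *\<^sub>R u + sqrt (1 - c\<^sup>2) *\<^sub>R w" using sp by (simp add: w_def v'_def)
    have "v = cos (arccos c) *\<^sub>R u + sin (arccos c) *\<^sub>R w" using cosc sinc vr by simp
    then show ?thesis using nw uw unfolding c_def by blast
  next
    case False
    then have c2: "c\<^sup>2 = 1" using cb abs_le_square_iff[of c 1] by simp
    then have "v' = 0" using nv' by simp
    then have vv: "v = c *\<^sub>R u" by (simp add: v'_def)
    obtain y :: 'a where y: "y \<noteq> 0" "orthogonal u y" using orthogonal_to_vector_exists[OF D] by blast
    define w where "w = sgn y"
    have nw: "norm w = 1" using y by (simp add: w_def norm_sgn)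
    have uw: "inner u w = 0" using y by (simp add: w_def orthogonal_def sgn_div_norm)
    have vr: "v = c *\<^sub>R u + sqrt (1 - c\<^sup>2) *\<^sub>R w" using c2 vv by simp
    have "v = cos (arccos c) *\<^sub>R u + sin (arccos c) *\<^sub>R w" using cosc sinc vr by simp
    then show ?thesis using nw uw unfolding c_def by blast
  qed
qed

lemma radial_path: "path (radial p q u)"
  unfolding path_def radial_def by (intro continuous_intros)

lemma arc_path: "path (circ_arc R th u w)"
  unfolding path_def circ_arc_def by (intro continuous_intros)

lemma radial_image:
  fixes u :: "'a::euclidean_space"
  assumes G: "G = - cball 0 1" and u: "norm u = 1" and pq: "1 < p" "1 < q"
  shows "path_image (radial p q u) \<subseteq> G"
proof
  fix z assume "z \<in> path_image (radial p q u)"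
  then obtain t where t: "t \<in> {0..1}" "z = radial p q u t" by (auto simp: path_image_def)
  then have "norm z = p + t * (q - p)" using norm_radial[OF u pq] by simp
  then have "1 < norm z" using radial_rho[OF pq] t by auto
  then show "z \<in> G" using G by auto
qed

lemma arc_image:
  fixes u w :: "'a::euclidean_space"
  assumes G: "G = - cball 0 1" and o: "norm u = 1" "norm w = 1" "inner u w = 0" and R: "1 < R"
  shows "path_image (circ_arc R th u w) \<subseteq> G"
  using arc_norm[OF o, of R] R G by (auto simp: path_image_def)

lemma path_bound:
  fixes x y :: "'a::euclidean_space"
  assumes D: "DIM('a) \<ge> 2" and G: "G = - cball 0 1" and x: "x \<in> G" and y: "y \<in> G" and rho: "1 < rho"
  shows "qh_dist G x y \<le> ereal (\<bar>ln (rho - 1) - ln (norm x - 1)\<bar>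
      + rho * arccos (inner (sgn x) (sgn y)) / (rho - 1) + \<bar>ln (norm y - 1) - ln (rho - 1)\<bar>)"
proof -
  define u where "u = sgn x"
  define v where "v = sgn y"
  define th where "th = arccos (inner u v)"
  have nx: "1 < norm x" and ny: "1 < norm y" using x y G by auto
  have u: "norm u = 1" and v: "norm v = 1" using nx ny by (auto simp: u_def v_def norm_sgn)
  obtain w where w: "norm w = 1" "inner u w = 0" "v = cos th *\<^sub>R u + sin th *\<^sub>R w"
    using exists_w[OF D u v] unfolding th_def by blast
  have th0: "0 \<le> th" unfolding th_def
    using Cauchy_Schwarz_ineq2[of u v] u v arccos_bounded[of "inner u v"] by auto
  define g1 where "g1 = radial (norm x) rho u"
  define g2 where "g2 = circ_arc rho th u w"
  define g3 where "g3 = radial rho (norm y) v"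
  define g where "g = g1 +++ (g2 +++ g3)"
  have e12: "g1 1 = g2 0" by (simp add: g1_def g2_def radial_def circ_arc_def)
  have e23: "g2 1 = g3 0" using w(3) by (simp add: g2_def g3_def radial_def circ_arc_def)
  have pf12: "pathfinish g1 = pathstart g2" using e12 by (simp add: pathfinish_def pathstart_def)
  have pf23: "pathfinish g2 = pathstart g3" using e23 by (simp add: pathfinish_def pathstart_def)
  have pf123: "pathfinish g1 = pathstart (g2 +++ g3)" using pf12 by simp
  have nx0: "norm x \<noteq> 0" "norm y \<noteq> 0" using nx ny by auto
  have st: "pathstart g = x" unfolding g_def pathstart_join using nx0 by (simp add: g_def g1_def u_def radial_def sgn_div_norm pathstart_def right_inverse)
  have fi: "pathfinish g = y" unfolding g_def pathfinish_join using nx0 by (simp add: g_def g3_def v_def radial_def sgn_div_norm pathfinish_def right_inverse)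
  have pa: "path g" unfolding g_def
    by (intro path_join_imp pf12 pf23 pf123) (simp_all add: g1_def g2_def g3_def radial_path arc_path)
  have im: "path_image g \<subseteq> G" unfolding g_def
    using radial_image[OF G u nx rho] arc_image[OF G u w(1,2) rho] radial_image[OF G v rho ny]
    by (subst path_image_join[OF pf123], subst path_image_join[OF pf23]) (auto simp: g1_def g2_def g3_def)
  have rho0: "0 \<le> rho" using rho by simp
  have e123: "g1 1 = (g2 +++ g3) 0" using e12 by (simp add: joinpaths_def)
  have l1: "wbv (\<lambda>z. 1) g1 \<bar>rho - norm x\<bar>" unfolding g1_def by (rule radial_len[OF u])
  have l2: "wbv (\<lambda>z. 1) g2 (rho * th)" unfolding g2_def by (rule arc_len[OF u w(1,2) rho0 th0])
  have l3: "wbv (\<lambda>z. 1) g3 \<bar>norm y - rho\<bar>" unfolding g3_def by (rule radial_len[OF v])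
  have l23: "wbv (\<lambda>z. 1) (g2 +++ g3) (rho * th + \<bar>norm y - rho\<bar>)"
    by (rule wbv_join[OF _ l2 l3 e23]) simp
  have len: "wbv (\<lambda>z. 1) g (\<bar>rho - norm x\<bar> + (rho * th + \<bar>norm y - rho\<bar>))"
    unfolding g_def by (rule wbv_join[OF _ l1 l23 e123]) simp
  have "curve_length g < \<infinity>"
    by (rule le_less_trans[OF curve_length_le[OF len]]) simp
  then have rect: "rectifiable_curve g" using pa by (simp add: rectifiable_curve_def)
  have w0: "\<And>z. 0 \<le> 1 / bdist G z" by (simp add: bdist_def infdist_nonneg)
  have q1: "wbv (\<lambda>z. 1 / bdist G z) g1 \<bar>ln (rho - 1) - ln (norm x - 1)\<bar>"
    unfolding g1_def by (rule radial_qh[OF G u nx rho])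
  have q2: "wbv (\<lambda>z. 1 / bdist G z) g2 (rho * th / (rho - 1))"
    unfolding g2_def by (rule arc_qh[OF G u w(1,2) rho th0])
  have q3: "wbv (\<lambda>z. 1 / bdist G z) g3 \<bar>ln (norm y - 1) - ln (rho - 1)\<bar>"
    unfolding g3_def by (rule radial_qh[OF G v rho ny])
  have q23: "wbv (\<lambda>z. 1 / bdist G z) (g2 +++ g3) (rho * th / (rho - 1) + \<bar>ln (norm y - 1) - ln (rho - 1)\<bar>)"
    by (rule wbv_join[OF w0 q2 q3 e23])
  have qh: "wbv (\<lambda>z. 1 / bdist G z) g (\<bar>ln (rho - 1) - ln (norm x - 1)\<bar>
      + (rho * th / (rho - 1) + \<bar>ln (norm y - 1) - ln (rho - 1)\<bar>))"
    unfolding g_def by (rule wbv_join[OF w0 q1 q23 e123])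
  have "qh_dist G x y \<le> qh_length G g"
    unfolding qh_dist_def by (rule INF_lower) (use rect im st fi in auto)
  also have "\<dots> \<le> ereal (\<bar>ln (rho - 1) - ln (norm x - 1)\<bar>
      + (rho * th / (rho - 1) + \<bar>ln (norm y - 1) - ln (rho - 1)\<bar>))"
    by (rule qh_length_le[OF qh])
  finally show ?thesis by (simp add: th_def u_def v_def add.assoc)
qed



lemma y_le_2sin:
  fixes y :: real
  assumes "0 \<le> y" "y \<le> pi/2"
  shows "y \<le> 2 * sin y"
proof (cases "y \<le> pi/3")
  case True
  have "y < pi/2" using True assms pi_gt_zero by linarith
  then have lt: "\<bar>y\<bar> < pi/2" using assms by simp
  have c0: "cos y > 0" using assms lt by (intro cos_gt_zero_pi) auto
  have s0: "0 \<le> sin y" using assms pi_gt_zero by (intro sin_ge_zero) auto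
  have "y \<le> tan y" using abs_tan_ge[OF lt] assms c0 s0 by (simp add: tan_def)
  then have "y * cos y \<le> sin y" using c0 by (simp add: tan_def field_simps)
  moreover have "1/2 \<le> cos y"
    using cos_mono_le_eq[of "pi/3" y] True assms cos_60 by simp
  ultimately have "y * (1/2) \<le> sin y"
    using assms by (meson mult_left_mono order_trans)
  then show ?thesis by simp
next
  case False
  have "sin (pi/3) \<le> sin y"
    using sin_mono_le_eq[of "pi/3" y] False assms by simp
  then have s: "sqrt 3 / 2 \<le> sin y" using sin_60 by simp
  have "(1.6::real)\<^sup>2 \<le> 3" by (simp add: power2_eq_square)
  then have "1.6 \<le> sqrt 3" by (rule real_le_rsqrt)
  moreover have "pi \<le> 3.2" using pi_approx by simp
  ultimately show ?thesis using s assms by linarith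
qed

lemma unit_chord:
  fixes u v :: "'a::euclidean_space"
  assumes u: "norm u = 1" and v: "norm v = 1"
  shows "arccos (inner u v) \<le> 2 * norm (u - v)" "0 \<le> arccos (inner u v)" "arccos (inner u v) \<le> pi"
proof -
  define th where "th = arccos (inner u v)"
  have cb: "\<bar>inner u v\<bar> \<le> 1" using Cauchy_Schwarz_ineq2[of u v] u v by simp
  have thb: "0 \<le> th" "th \<le> pi" using arccos_bounded[of "inner u v"] cb by (auto simp: th_def)
  have uu: "inner u u = 1" "inner v v = 1" using u v by (simp_all add: power2_norm_eq_inner[symmetric])
  have "(norm (u - v))\<^sup>2 = inner (u - v) (u - v)" by (simp add: power2_norm_eq_inner)
  also have "\<dots> = 2 - 2 * inner u v" by (simp add: inner_diff_left inner_diff_right uu inner_commute)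
  also have "inner u v = cos th" using cb by (simp add: th_def cos_arccos_abs)
  also have "cos th = 1 - 2 * (sin (th/2))\<^sup>2"
  proof -
    have e: "2 * (th/2) = th" by simp
    show ?thesis using cos_double_sin[of "th/2"] unfolding e .
  qed
  finally have "(norm (u - v))\<^sup>2 = (2 * sin (th/2))\<^sup>2" by (simp add: power2_eq_square)
  moreover have "0 \<le> sin (th/2)" using thb by (intro sin_ge_zero) auto
  ultimately have "norm (u - v) = 2 * sin (th/2)"
    using power2_eq_iff_nonneg[of "norm (u-v)" "2 * sin (th/2)"] by simp
  moreover have "th/2 \<le> 2 * sin (th/2)" using thb by (intro y_le_2sin) auto
  ultimately show "arccos (inner u v) \<le> 2 * norm (u - v)" unfolding th_def by linarith
  show "0 \<le> arccos (inner u v)" "arccos (inner u v) \<le> pi" using thb by (auto simp: th_def)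
qed

lemma dist_sgn_sq:
  fixes a b :: "'a::euclidean_space"
  assumes "a \<noteq> 0" "b \<noteq> 0"
  shows "norm a * norm b * (norm (sgn a - sgn b))\<^sup>2 \<le> (dist a b)\<^sup>2"
proof -
  have na: "norm a > 0" "norm b > 0" using assms by auto
  have sa: "inner (sgn a) (sgn a) = 1" "inner (sgn b) (sgn b) = 1"
    using assms by (simp_all add: power2_norm_eq_inner[symmetric] norm_sgn)
  have sab: "inner (sgn a) (sgn b) = inner a b / (norm a * norm b)"
    by (simp add: sgn_div_norm field_simps)
  have "(norm (sgn a - sgn b))\<^sup>2 = inner (sgn a - sgn b) (sgn a - sgn b)" by (simp add: power2_norm_eq_inner)
  also have "\<dots> = inner (sgn a) (sgn a) + inner (sgn b) (sgn b) - 2 * inner (sgn a) (sgn b)"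
    by (simp add: inner_diff_left inner_diff_right inner_commute)
  also have "\<dots> = 2 - 2 * (inner a b / (norm a * norm b))" using sa sab by simp
  finally have e1: "norm a * norm b * (norm (sgn a - sgn b))\<^sup>2 = 2 * norm a * norm b - 2 * inner a b"
    using na by (simp add: field_simps)
  have "(dist a b)\<^sup>2 = inner (a - b) (a - b)" by (simp add: dist_norm power2_norm_eq_inner)
  also have "\<dots> = (norm a)\<^sup>2 + (norm b)\<^sup>2 - 2 * inner a b"
    by (simp add: inner_diff_left inner_diff_right inner_commute power2_norm_eq_inner)
  finally have e2: "(dist a b)\<^sup>2 = (norm a)\<^sup>2 + (norm b)\<^sup>2 - 2 * inner a b" .
  have "2 * norm a * norm b \<le> (norm a)\<^sup>2 + (norm b)\<^sup>2"
    using sum_squares_bound[of "norm a" "norm b"] by (simp add: mult.assoc)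
  then show ?thesis using e1 e2 by linarith
qed

lemma dist_sgn:
  fixes a b :: "'a::euclidean_space"
  assumes "a \<noteq> 0" "b \<noteq> 0"
  shows "min (norm a) (norm b) * norm (sgn a - sgn b) \<le> dist a b"
proof -
  have "(min (norm a) (norm b))\<^sup>2 \<le> norm a * norm b"
    by (simp add: min_def power2_eq_square mult_left_mono mult_right_mono)
  then have "(min (norm a) (norm b) * norm (sgn a - sgn b))\<^sup>2 \<le> norm a * norm b * (norm (sgn a - sgn b))\<^sup>2"
    by (simp add: power_mult_distrib mult_right_mono)
  also have "\<dots> \<le> (dist a b)\<^sup>2" by (rule dist_sgn_sq[OF assms])
  finally show ?thesis by (rule power2_le_imp_le) simp
qed

lemma ln3_bounds: "0 < ln (3::real)" "ln (3::real) \<le> 3/2"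
proof -
  show "0 < ln (3::real)" by simp
  have "1 + 3/2 + (3/2)\<^sup>2/2 \<le> exp (3/2::real)" by (rule exp_lower_Taylor_quadratic) simp
  then have "3 \<le> exp (3/2::real)" by (simp add: power2_eq_square)
  then have "ln 3 \<le> ln (exp (3/2::real))" by (subst ln_le_cancel_iff) auto
  then show "ln (3::real) \<le> 3/2" by simp
qed

lemma C_ge8: "8 \<le> 4 * pi / ln (3::real)"
proof -
  have "8 * ln (3::real) \<le> 12" using ln3_bounds by simp
  also have "12 \<le> 4 * pi" using pi_gt3 by simp
  finally show ?thesis using ln3_bounds by (simp add: field_simps)
qed

lemma ln_ge_frac: "0 \<le> t \<Longrightarrow> t / (1 + t) \<le> ln (1 + (t::real))"
proof -
  assume t: "0 \<le> t"
  have "ln (1 / (1 + t)) \<le> 1 / (1 + t) - 1" using t by (intro ln_le_minus_one) auto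
  then show ?thesis using t by (simp add: ln_div field_simps)
qed

lemma small_arith:
  fixes t :: real
  assumes "0 \<le> t" "t \<le> 2"
  shows "ln (1 + t) + 2 * t \<le> 4 * pi / ln 3 * ln (1 + t)"
proof -
  let ?C = "4 * pi / ln (3::real)"
  have "t / 3 \<le> t / (1 + t)" using assms by (intro divide_left_mono) auto
  then have L: "t / 3 \<le> ln (1 + t)" using ln_ge_frac[OF assms(1)] by linarith
  have L0: "0 \<le> ln (1 + t)" using assms by simp
  have "2 * t \<le> 7 * ln (1 + t)" using L assms by linarith
  also have "\<dots> \<le> (?C - 1) * ln (1 + t)" using C_ge8 L0 by (intro mult_right_mono) auto
  finally show ?thesis by (simp add: algebra_simps)
qed

lemma large_arith:
  fixes L :: real
  assumes "ln 3 \<le> L"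
  shows "1 + 2 * L + 2 * pi \<le> 4 * pi / ln 3 * L"
proof -
  let ?C = "4 * pi / ln (3::real)"
  have C2: "0 \<le> ?C - 2" using C_ge8 by simp
  have "(?C - 2) * ln 3 \<le> (?C - 2) * L" using assms C2 by (intro mult_left_mono) auto
  moreover have "(?C - 2) * ln 3 = 4 * pi - 2 * ln 3" using ln3_bounds by (simp add: field_simps)
  moreover have "1 + 2 * pi \<le> 4 * pi - 2 * ln (3::real)" using ln3_bounds pi_gt3 by simp
  ultimately show ?thesis by (simp add: algebra_simps)
qed

lemma small_case:
  fixes a b D th :: real
  assumes ab: "0 < a" "0 < b" and D: "0 \<le> D" "\<bar>a - b\<bar> \<le> D"
    and th: "0 \<le> th" "(min a b + 1) * th \<le> 2 * D" and t: "D / min a b \<le> 2"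
  shows "\<bar>ln (min a b) - ln a\<bar> + (min a b + 1) * th / (min a b) + \<bar>ln b - ln (min a b)\<bar>
         \<le> 4 * pi / ln 3 * ln (1 + D / min a b)"
proof -
  define m where "m = min a b"
  have m0: "0 < m" using ab by (simp add: m_def)
  have "\<bar>ln m - ln a\<bar> + \<bar>ln b - ln m\<bar> = ln (max a b) - ln m"
    using ab by (auto simp: m_def min_def max_def)
  also have "\<dots> \<le> ln (m + D) - ln m"
    using ab D by (simp add: m_def) (auto simp: min_def max_def)
  also have "ln (m + D) - ln m = ln (1 + D / m)"
  proof -
    have "1 + D / m = (m + D) / m" using m0 by (simp add: field_simps)
    then show ?thesis using m0 D by (simp add: ln_div)
  qed
  finally have A: "\<bar>ln m - ln a\<bar> + \<bar>ln b - ln m\<bar> \<le> ln (1 + D / m)" .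
  have B: "(m + 1) * th / m \<le> 2 * (D / m)" using th m0 by (simp add: m_def[symmetric] divide_right_mono)
  have "ln (1 + D / m) + 2 * (D / m) \<le> 4 * pi / ln 3 * ln (1 + D / m)"
    using small_arith[of "D / m"] t m0 D by (simp add: m_def)
  then show ?thesis using A B by (simp add: m_def[symmetric])
qed

lemma arc_part:
  fixes M mu D q th :: real
  assumes M: "mu \<le> M" "M - mu \<le> D" "0 < mu" and D: "0 < D"
    and q: "0 \<le> q" "(mu + 1) * q \<le> D" and th: "0 \<le> th" "th \<le> 2 * q" "th \<le> pi"
  shows "(M + 1 + D) * th / (M + 1 + D - 1) \<le> 2 * pi"
proof -
  define rho where "rho = M + 1 + D"
  have r1: "0 < rho - 1" "D \<le> rho - 1" using M D by (simp_all add: rho_def)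
  have "rho * th \<le> 2 * pi * (rho - 1)"
  proof (cases "1 \<le> D")
    case True
    have "rho * th \<le> rho * pi" using th r1 by (intro mult_left_mono) auto
    also have "\<dots> \<le> (2 * (rho - 1)) * pi" using True M by (intro mult_right_mono) (auto simp: rho_def)
    finally show ?thesis by (simp add: algebra_simps)
  next
    case False
    have "1 * q \<le> (mu + 1) * q" using q M by (intro mult_right_mono) auto
    then have "q \<le> D" using q by simp
    have "rho * q \<le> (mu + 1 + 2 * D) * q" using M q by (intro mult_right_mono) (auto simp: rho_def)
    also have "\<dots> = (mu + 1) * q + 2 * D * q" by (simp add: algebra_simps)
    also have "\<dots> \<le> D + 2 * D * 1"
      using q \<open>q \<le> D\<close> False D by (intro add_mono mult_left_mono) auto
    finally have rq: "rho * q \<le> 3 * D" by simp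
    have "rho * th \<le> rho * (2 * q)" using th r1 by (intro mult_left_mono) auto
    also have "\<dots> = 2 * (rho * q)" by simp
    also have "\<dots> \<le> 6 * D" using rq by linarith
    also have "\<dots> \<le> 6 * (rho - 1)" using r1 by simp
    also have "\<dots> \<le> 2 * pi * (rho - 1)" using pi_gt3 r1 by (intro mult_right_mono) auto
    finally show ?thesis .
  qed
  then show ?thesis using r1 by (simp add: rho_def[symmetric] divide_le_eq)
qed

lemma large_case:
  fixes a b D q th :: real
  assumes ab: "0 < a" "0 < b" and D: "\<bar>a - b\<bar> \<le> D"
    and q: "0 \<le> q" "(min a b + 1) * q \<le> D" and th: "0 \<le> th" "th \<le> 2 * q" "th \<le> pi"
    and t: "2 < D / min a b"
  shows "\<bar>ln (max a b + 1 + D - 1) - ln a\<bar> + (max a b + 1 + D) * th / (max a b + 1 + D - 1)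
       + \<bar>ln b - ln (max a b + 1 + D - 1)\<bar> \<le> 4 * pi / ln 3 * ln (1 + D / min a b)"
proof -
  define mu where "mu = min a b"
  define M where "M = max a b"
  have mu0: "0 < mu" using ab by (simp add: mu_def)
  have D0: "0 < D"
  proof (rule ccontr)
    assume "\<not> 0 < D"
    then have "D / mu \<le> 0" using mu0 by (simp add: divide_nonpos_pos)
    then show False using t by (simp add: mu_def)
  qed
  have MM: "mu \<le> M" "M - mu \<le> D" using D by (auto simp: mu_def M_def min_def max_def)
  define t' where "t' = D / mu"
  have t'0: "0 \<le> t'" using D0 mu0 by (simp add: t'_def)
  have circ_arc: "(M + 1 + D) * th / (M + 1 + D - 1) \<le> 2 * pi"
    by (rule arc_part[OF MM mu0 D0 q[unfolded mu_def[symmetric]] th])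
  have lsum: "\<bar>ln (M + D) - ln a\<bar> + \<bar>ln b - ln (M + D)\<bar> = ln ((M + D) / mu) + ln ((M + D) / M)"
  proof -
    have "ln a \<le> ln (M + D)" "ln b \<le> ln (M + D)" using ab D0 by (auto simp: M_def max_def)
    then have "\<bar>ln (M + D) - ln a\<bar> + \<bar>ln b - ln (M + D)\<bar> = 2 * ln (M + D) - ln a - ln b" by simp
    also have "ln a + ln b = ln mu + ln M" by (auto simp: mu_def M_def min_def max_def)
    then have "2 * ln (M + D) - ln a - ln b = ln ((M + D) / mu) + ln ((M + D) / M)"
      using mu0 MM D0 by (simp add: ln_div)
    finally show ?thesis .
  qed
  have l1: "ln ((M + D) / mu) \<le> ln 2 + ln (1 + t')"
  proof -
    have "(M + D) / mu \<le> (2 * (mu + D)) / mu"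
      using MM mu0 D0 by (intro divide_right_mono) auto
    also have "\<dots> = 2 * (1 + t')" using mu0 by (simp add: t'_def field_simps)
    finally have "(M + D) / mu \<le> 2 * (1 + t')" .
    then have "ln ((M + D) / mu) \<le> ln (2 * (1 + t'))" using mu0 MM D0 t'0 by (subst ln_le_cancel_iff) auto
    also have "\<dots> = ln 2 + ln (1 + t')" using t'0 ln_mult[of 2 "1 + t'"] by simp
    finally show ?thesis .
  qed
  have l2: "ln ((M + D) / M) \<le> ln (1 + t')"
  proof -
    have "(M + D) / M \<le> 1 + t'"
      using MM mu0 D0 by (simp add: t'_def field_simps mult_left_mono)
    then show ?thesis using mu0 MM D0 t'0 by (subst ln_le_cancel_iff) auto
  qed
  have ln2: "ln (2::real) \<le> 1" using ln_le_minus_one[of 2] by simp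
  have L3: "ln 3 \<le> ln (1 + t')" using t by (subst ln_le_cancel_iff) (auto simp: t'_def mu_def)
  have "\<bar>ln (M + D) - ln a\<bar> + (M + 1 + D) * th / (M + 1 + D - 1) + \<bar>ln b - ln (M + D)\<bar>
      \<le> 1 + 2 * ln (1 + t') + 2 * pi" using lsum l1 l2 ln2 circ_arc by linarith
  also have "\<dots> \<le> 4 * pi / ln 3 * ln (1 + t')" by (rule large_arith[OF L3])
  finally show ?thesis by (simp add: M_def t'_def mu_def)
qed

lemma upper:
  fixes x y :: "'a::euclidean_space"
  assumes DIM: "DIM('a) \<ge> 2" and G: "G = - cball 0 1" and x: "x \<in> G" and y: "y \<in> G"
  shows "qh_dist G x y \<le> ereal (4 * pi / ln 3 * j_dist G x y)"
proof -
  define a where "a = norm x - 1"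
  define b where "b = norm y - 1"
  have a0: "0 < a" and b0: "0 < b" using x y G by (auto simp: a_def b_def)
  have x0: "x \<noteq> 0" and y0: "y \<noteq> 0" using x y G by auto
  have bx: "bdist G x = a" "bdist G y = b"
    using bdist_ball[OF G, of x] bdist_ball[OF G, of y] a0 b0 by (auto simp: a_def b_def)
  define d where "d = dist x y"
  have jd: "j_dist G x y = ln (1 + d / min a b)" by (simp add: j_dist_def bx d_def)
  have dab: "\<bar>a - b\<bar> \<le> d" using norm_triangle_ineq3[of x y] by (simp add: a_def b_def d_def dist_norm)
  have d0: "0 \<le> d" by (simp add: d_def)
  define q where "q = norm (sgn x - sgn y)"
  define th where "th = arccos (inner (sgn x) (sgn y))"
  have su: "norm (sgn x) = 1" "norm (sgn y) = 1" using x0 y0 by (simp_all add: norm_sgn)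
  have th: "th \<le> 2 * q" "0 \<le> th" "th \<le> pi" using unit_chord[OF su] by (simp_all add: th_def q_def)
  have q0: "0 \<le> q" by (simp add: q_def)
  have mn: "min (norm x) (norm y) = min a b + 1" by (simp add: a_def b_def min_def)
  have mq: "(min a b + 1) * q \<le> d" using dist_sgn[OF x0 y0] mn by (simp add: q_def d_def)
  have mab: "0 < min a b" using a0 b0 by simp
  show ?thesis
  proof (cases "d / min a b \<le> 2")
    case True
    have r1: "1 < min a b + 1" using mab by simp
    have pb: "qh_dist G x y \<le> ereal (\<bar>ln (min a b + 1 - 1) - ln a\<bar>
      + (min a b + 1) * th / (min a b + 1 - 1) + \<bar>ln b - ln (min a b + 1 - 1)\<bar>)" (is "_ \<le> ereal ?X")
      using path_bound[OF DIM G x y r1] unfolding a_def[symmetric] b_def[symmetric] th_def[symmetric] .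
    have "(min a b + 1) * th \<le> (min a b + 1) * (2 * q)" using th mab by (intro mult_left_mono) auto
    also have "\<dots> \<le> 2 * d" using mq by simp
    finally have tq: "(min a b + 1) * th \<le> 2 * d" .
    have "\<bar>ln (min a b + 1 - 1) - ln a\<bar> + (min a b + 1) * th / (min a b + 1 - 1) + \<bar>ln b - ln (min a b + 1 - 1)\<bar>
        \<le> 4 * pi / ln 3 * ln (1 + d / min a b)"
      using small_case[OF a0 b0 d0 dab th(2) tq True] by simp
    then have "ereal ?X \<le> ereal (4 * pi / ln 3 * j_dist G x y)" using jd by simp
    then show ?thesis by (rule order_trans[OF pb])
  next
    case False
    have r1: "1 < max a b + 1 + d" using a0 b0 d0 by simp
    have pb: "qh_dist G x y \<le> ereal (\<bar>ln (max a b + 1 + d - 1) - ln a\<bar>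
      + (max a b + 1 + d) * th / (max a b + 1 + d - 1) + \<bar>ln b - ln (max a b + 1 + d - 1)\<bar>)" (is "_ \<le> ereal ?X")
      using path_bound[OF DIM G x y r1] unfolding a_def[symmetric] b_def[symmetric] th_def[symmetric] .
    have "\<bar>ln (max a b + 1 + d - 1) - ln a\<bar> + (max a b + 1 + d) * th / (max a b + 1 + d - 1)
       + \<bar>ln b - ln (max a b + 1 + d - 1)\<bar> \<le> 4 * pi / ln 3 * ln (1 + d / min a b)"
      using False by (intro large_case[OF a0 b0 dab q0 mq th(2) th(1) th(3)]) simp
    then have "ereal ?X \<le> ereal (4 * pi / ln 3 * j_dist G x y)" using jd by simp
    then show ?thesis by (rule order_trans[OF pb])
  qed
qed

lemma sin_ge_ycos:
  fixes y :: real
  assumes "0 \<le> y" "y < pi/2"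
  shows "y * cos y \<le> sin y"
proof -
  have lt: "\<bar>y\<bar> < pi/2" using assms by simp
  have c0: "cos y > 0" using assms by (intro cos_gt_zero_pi) auto
  have s0: "0 \<le> sin y" using assms pi_gt_zero by (intro sin_ge_zero) auto
  have "y \<le> tan y" using abs_tan_ge[OF lt] assms c0 s0 by (simp add: tan_def)
  then show "y * cos y \<le> sin y" using c0 by (simp add: tan_def field_simps)
qed

lemma cos_ge_1m:
  fixes y :: real
  assumes "0 \<le> y" "y \<le> 2"
  shows "1 - y \<le> cos y"
proof -
  have e: "2 * (y/2) = y" by simp
  have c: "cos y = 1 - 2 * (sin (y/2))\<^sup>2" using cos_double_sin[of "y/2"] unfolding e .
  have "(sin (y/2))\<^sup>2 \<le> (y/2)\<^sup>2"
    using abs_sin_x_le_abs_x[of "y/2"] abs_le_square_iff[of "sin (y/2)" "y/2"] by linarith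
  then have "cos y \<ge> 1 - y\<^sup>2 / 2" using c by (simp add: power2_eq_square)
  moreover have "y\<^sup>2 / 2 \<le> y" using assms mult_left_mono[of y 2 y] by (simp add: power2_eq_square)
  ultimately show ?thesis by linarith
qed

lemma ereal_pi_limit:
  fixes X :: ereal
  assumes h: "\<And>eta. 0 < eta \<Longrightarrow> eta \<le> 1/2 \<Longrightarrow> ereal ((1 - eta) / (1 + eta) * cos eta * pi) \<le> X"
  shows "ereal pi \<le> X"
proof (rule ccontr)
  assume "\<not> ereal pi \<le> X"
  then have Xl: "X < ereal pi" by simp
  have bnd: "pi * (1 - 3 * eta) \<le> (1 - eta) / (1 + eta) * cos eta * pi" if "0 < eta" "eta \<le> 1/2" for eta :: real
  proof -
    have c: "1 - eta \<le> cos eta" using cos_ge_1m[of eta] that by simp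
    have f: "1 - 2 * eta \<le> (1 - eta) / (1 + eta)" using that by (simp add: field_simps)
    have "(1 - 2 * eta) * (1 - eta) \<le> (1 - eta) / (1 + eta) * cos eta"
      using that c f by (intro mult_mono) auto
    moreover have "1 - 3 * eta \<le> (1 - 2 * eta) * (1 - eta)" using that by (simp add: algebra_simps)
    ultimately have "1 - 3 * eta \<le> (1 - eta) / (1 + eta) * cos eta" by linarith
    then have "pi * (1 - 3 * eta) \<le> pi * ((1 - eta) / (1 + eta) * cos eta)"
      by (intro mult_left_mono) auto
    then show ?thesis by (simp only: mult.commute)
  qed
  obtain x where Xx: "X = ereal x"
  proof (cases X)
    case (real r) then show ?thesis using that by blast
  next
    case PInf then show ?thesis using Xl by simp
  next
    case MInf then show ?thesis using h[of "1/2"] by simp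
  qed
  then have xl: "x < pi" using Xl by simp
  define eta where "eta = min (1/2) ((pi - x) / (6 * pi))"
  have e0: "0 < eta" "eta \<le> 1/2" using xl by (auto simp: eta_def)
  have "pi * (3 * eta) \<le> pi * (3 * ((pi - x) / (6 * pi)))" using e0 by (intro mult_left_mono) (auto simp: eta_def)
  also have "\<dots> = (pi - x) / 2" by (simp add: field_simps)
  finally have "x < pi * (1 - 3 * eta)" using xl by (simp add: algebra_simps)
  also have "\<dots> \<le> (1 - eta) / (1 + eta) * cos eta * pi" by (rule bnd[OF e0])
  finally have "ereal x < ereal ((1 - eta) / (1 + eta) * cos eta * pi)" by simp
  then show False using h[OF e0] Xx by simp
qed

lemma angle_chord:
  fixes p q e :: "'a::euclidean_space"
  assumes p: "norm p = 1" and q: "norm q = 1" and e: "norm e = 1"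
  shows "2 * sin (\<bar>arccos (inner p e) - arccos (inner q e)\<bar> / 2) \<le> norm (p - q)"
proof -
  define al where "al = arccos (inner p e)"
  define be where "be = arccos (inner q e)"
  have pe: "\<bar>inner p e\<bar> \<le> 1" "\<bar>inner q e\<bar> \<le> 1" using Cauchy_Schwarz_ineq2[of p e] Cauchy_Schwarz_ineq2[of q e] p q e by auto
  have ca: "cos al = inner p e" "cos be = inner q e" using pe by (simp_all add: al_def be_def cos_arccos_abs)
  have sa: "sin al = sqrt (1 - (inner p e)\<^sup>2)" "sin be = sqrt (1 - (inner q e)\<^sup>2)"
    using pe by (simp_all add: al_def be_def sin_arccos_abs)
  have bnd: "0 \<le> al" "al \<le> pi" "0 \<le> be" "be \<le> pi"
    using arccos_bounded[of "inner p e"] arccos_bounded[of "inner q e"] pe by (auto simp: al_def be_def)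
  have uu: "inner p p = 1" "inner q q = 1" "inner e e = 1"
    using p q e by (simp_all add: power2_norm_eq_inner[symmetric])
  define p' where "p' = p - inner p e *\<^sub>R e"
  define q' where "q' = q - inner q e *\<^sub>R e"
  have np: "(norm p')\<^sup>2 = 1 - (inner p e)\<^sup>2"
  proof -
    have "(norm p')\<^sup>2 = inner p' p'" by (simp add: power2_norm_eq_inner)
    also have "\<dots> = 1 - (inner p e)\<^sup>2"
      by (simp add: p'_def inner_diff_left inner_diff_right uu inner_commute power2_eq_square)
    finally show ?thesis .
  qed
  have nq: "(norm q')\<^sup>2 = 1 - (inner q e)\<^sup>2"
  proof -
    have "(norm q')\<^sup>2 = inner q' q'" by (simp add: power2_norm_eq_inner)
    also have "\<dots> = 1 - (inner q e)\<^sup>2"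
      by (simp add: q'_def inner_diff_left inner_diff_right uu inner_commute power2_eq_square)
    finally show ?thesis .
  qed
  have np': "norm p' = sin al" using np sa by (simp add: real_sqrt_unique)
  have nq': "norm q' = sin be" using nq sa by (simp add: real_sqrt_unique)
  have pq: "inner p q = inner p e * inner q e + inner p' q'"
    by (simp add: p'_def q'_def inner_diff_left inner_diff_right uu inner_commute)
  have "inner p' q' \<le> norm p' * norm q'" by (rule norm_cauchy_schwarz)
  then have "inner p q \<le> cos (al - be)" using pq ca np' nq' by (simp add: cos_diff)
  have "(norm (p - q))\<^sup>2 = inner (p - q) (p - q)" by (simp add: power2_norm_eq_inner)
  also have "\<dots> = 2 - 2 * inner p q" by (simp add: inner_diff_left inner_diff_right uu inner_commute)
  finally have n2: "(norm (p - q))\<^sup>2 = 2 - 2 * inner p q" .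
  define z where "z = \<bar>al - be\<bar>"
  have "cos (al - be) = cos z" by (simp add: z_def abs_if cos_minus[of "al - be", symmetric])
  also have "cos z = 1 - 2 * (sin (z/2))\<^sup>2"
  proof -
    have e: "2 * (z/2) = z" by simp
    show ?thesis using cos_double_sin[of "z/2"] unfolding e .
  qed
  finally have "(2 * sin (z/2))\<^sup>2 \<le> (norm (p - q))\<^sup>2"
    using n2 \<open>inner p q \<le> cos (al - be)\<close> by (simp add: power2_eq_square)
  then have "2 * sin (z/2) \<le> norm (p - q)" by (rule power2_le_imp_le) simp
  then show ?thesis by (simp add: z_def al_def be_def)
qed

lemma term_bound:
  fixes g :: "real \<Rightarrow> 'a::euclidean_space" and e :: 'a
  assumes G: "G = - cball 0 1" and e: "norm e = 1" and ab: "a \<le> b"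
    and eta: "0 < eta" "eta \<le> 1/2"
    and big: "\<And>s. s \<in> {a..b} \<Longrightarrow> 1 < norm (g s)"
    and near: "\<And>s. s \<in> {a..b} \<Longrightarrow> norm (g s) < norm (g a) + eta"
    and nb: "norm (g a) - eta < norm (g b)"
    and ph: "\<bar>arccos (inner (sgn (g b)) e) - arccos (inner (sgn (g a)) e)\<bar> < eta"
  shows "(1 - eta) / (1 + eta) * cos eta * \<bar>arccos (inner (sgn (g b)) e) - arccos (inner (sgn (g a)) e)\<bar>
     \<le> dist (g b) (g a) * (INF s\<in>{a..b}. 1 / bdist G (g s))"
proof -
  define z where "z = \<bar>arccos (inner (sgn (g b)) e) - arccos (inner (sgn (g a)) e)\<bar>"
  define ra where "ra = norm (g a)"
  have ra1: "1 < ra" using big[of a] ab by (simp add: ra_def)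
  have z0: "0 \<le> z" "z < eta" using ph by (simp_all add: z_def)
  have ga0: "g a \<noteq> 0" "g b \<noteq> 0" using big[of a] big[of b] ab by auto
  have I: "1 / (ra + eta) \<le> (INF s\<in>{a..b}. 1 / bdist G (g s))"
  proof (rule cINF_greatest)
    show "{a..b} \<noteq> {}" using ab by simp
    fix s assume s: "s \<in> {a..b}"
    have bd: "bdist G (g s) = norm (g s) - 1" using bdist_ball[OF G, of "g s"] big[OF s] by simp
    have "0 < norm (g s) - 1" "norm (g s) - 1 \<le> ra + eta" using big[OF s] near[OF s] by (simp_all add: ra_def)
    then show "1 / (ra + eta) \<le> 1 / bdist G (g s)" unfolding bd by (intro divide_left_mono) auto
  qed
  have cz: "cos eta \<le> cos (z/2)"
  proof -
    have "eta \<le> pi" "z/2 \<le> pi" "z/2 \<le> eta" using z0 eta pi_gt3 by auto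
    then show ?thesis using z0 eta by (subst cos_mono_le_eq) auto
  qed
  have sz: "(z/2) * cos (z/2) \<le> sin (z/2)"
  proof (rule sin_ge_ycos)
    show "0 \<le> z/2" using z0 by simp
    show "z/2 < pi/2" using z0 eta pi_gt3 by simp
  qed
  have ce0: "0 \<le> cos eta" using eta pi_gt3 by (intro cos_ge_zero) auto
  have "z * cos eta \<le> z * cos (z/2)" using cz z0 by (intro mult_left_mono) auto
  also have "\<dots> \<le> 2 * sin (z/2)" using sz by simp
  also have "\<dots> \<le> norm (sgn (g b) - sgn (g a))"
    unfolding z_def by (rule angle_chord) (use ga0 e in \<open>simp_all add: norm_sgn\<close>)
  finally have P: "z * cos eta \<le> norm (sgn (g b) - sgn (g a))" .
  have m: "ra - eta \<le> min (norm (g b)) (norm (g a))" using nb eta by (simp add: ra_def)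
  have "(ra - eta) * (z * cos eta) \<le> min (norm (g b)) (norm (g a)) * norm (sgn (g b) - sgn (g a))"
    using P m ra1 eta z0 ce0 by (intro mult_mono) auto
  also have "\<dots> \<le> dist (g b) (g a)" by (rule dist_sgn[OF ga0(2) ga0(1)])
  finally have Dd: "(ra - eta) * (z * cos eta) \<le> dist (g b) (g a)" .
  have fr: "(1 - eta) / (1 + eta) \<le> (ra - eta) / (ra + eta)"
    using ra1 eta by (simp add: field_simps)
  have "(1 - eta) / (1 + eta) * cos eta * z \<le> (ra - eta) / (ra + eta) * cos eta * z"
    using fr ce0 z0 by (intro mult_right_mono) auto
  also have "\<dots> = ((ra - eta) * (z * cos eta)) * (1 / (ra + eta))" by (simp add: field_simps)
  also have "\<dots> \<le> dist (g b) (g a) * (INF s\<in>{a..b}. 1 / bdist G (g s))"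
    using Dd I ra1 eta z0 ce0 by (intro mult_mono) auto
  finally show ?thesis by (simp add: z_def)
qed

lemma lower_length:
  fixes g :: "real \<Rightarrow> 'a::euclidean_space" and e :: 'a
  assumes G: "G = - cball 0 1" and p: "path g" and im: "path_image g \<subseteq> G" and e: "norm e = 1"
    and st: "sgn (g 0) = e" and fi: "sgn (g 1) = - e" and eta: "0 < eta" "eta \<le> 1/2"
  shows "ereal ((1 - eta) / (1 + eta) * cos eta * pi) \<le> qh_length G g"
proof -
  define ph where "ph t = arccos (inner (sgn (g t)) e)" for t
  define c where "c = (1 - eta) / (1 + eta) * cos eta"
  have c0: "0 \<le> c" unfolding c_def using eta pi_gt3 by (intro mult_nonneg_nonneg cos_ge_zero) auto
  have big: "\<And>s. s \<in> {0..1} \<Longrightarrow> 1 < norm (g s)" using im G by (force simp: path_image_def)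
  have cg: "continuous_on {0..1} g" using p by (simp add: path_def)
  have cn: "continuous_on {0..1} (\<lambda>t. norm (g t))" by (intro continuous_intros cg)
  have ib: "\<forall>t\<in>{0..1}. - 1 \<le> inner (sgn (g t)) e \<and> inner (sgn (g t)) e \<le> 1"
  proof
    fix t :: real assume t: "t \<in> {0..1}"
    have "norm (sgn (g t)) = 1" using big[OF t] by (auto simp: norm_sgn)
    then have "\<bar>inner (sgn (g t)) e\<bar> \<le> 1" using Cauchy_Schwarz_ineq2[of "sgn (g t)" e] e by simp
    then show "- 1 \<le> inner (sgn (g t)) e \<and> inner (sgn (g t)) e \<le> 1" by linarith
  qed
  have nz: "\<forall>t\<in>{0..1}. g t \<noteq> 0" using big by force
  have cph: "continuous_on {0..1} ph" unfolding ph_def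
    by (intro continuous_on_arccos continuous_intros cg nz ib)
  obtain d1 where d1: "d1 > 0" "\<And>x x'. x \<in> {0..1} \<Longrightarrow> x' \<in> {0..1} \<Longrightarrow> dist x' x < d1 \<Longrightarrow>
      dist (norm (g x')) (norm (g x)) < eta"
    using compact_uniformly_continuous[OF cn compact_Icc] eta unfolding uniformly_continuous_on_def by metis
  obtain d2 where d2: "d2 > 0" "\<And>x x'. x \<in> {0..1} \<Longrightarrow> x' \<in> {0..1} \<Longrightarrow> dist x' x < d2 \<Longrightarrow>
      dist (ph x') (ph x) < eta"
    using compact_uniformly_continuous[OF cph compact_Icc] eta unfolding uniformly_continuous_on_def by metis
  obtain n where n: "inverse (real (Suc n)) < min d1 d2" using reals_Archimedean[of "min d1 d2"] d1 d2 by auto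
  define m where "m = Suc n"
  define t where "t i = real i / real m" for i
  have m0: "0 < real m" by (simp add: m_def)
  have part: "(m, t) \<in> partitions01"
    unfolding partitions01_def using m0 by (auto simp: t_def divide_strict_right_mono)
  have T: "c * \<bar>ph (t (Suc i)) - ph (t i)\<bar> \<le> dist (g (t (Suc i))) (g (t i)) * (INF s\<in>{t i..t (Suc i)}. 1 / bdist G (g s))"
    if i: "i < m" for i
  proof -
    define a where "a = t i"
    define b where "b = t (Suc i)"
    have ab: "0 \<le> a" "a \<le> b" "b \<le> 1" using i m0 by (auto simp: a_def b_def t_def divide_le_eq_1 divide_right_mono)
    have ba: "b - a = inverse (real m)" using m0 by (simp add: a_def b_def t_def field_simps)
    have close: "dist s a < min d1 d2" if "s \<in> {a..b}" for s
      using that ba n by (simp add: dist_real_def m_def)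
    have sub: "\<And>s. s \<in> {a..b} \<Longrightarrow> s \<in> {0..1}" using ab by auto
    have "c * \<bar>ph b - ph a\<bar> \<le> dist (g b) (g a) * (INF s\<in>{a..b}. 1 / bdist G (g s))"
      unfolding c_def ph_def
    proof (rule term_bound[OF G e ab(2) eta])
      show "\<And>s. s \<in> {a..b} \<Longrightarrow> 1 < norm (g s)" using big sub by blast
      show "norm (g s) < norm (g a) + eta" if "s \<in> {a..b}" for s
        using d1(2)[of a s] sub[OF that] ab close[OF that] by (simp add: dist_real_def)
      show "norm (g a) - eta < norm (g b)"
        using d1(2)[of a b] ab close[of b] by (simp add: dist_real_def)
      show "\<bar>arccos (inner (sgn (g b)) e) - arccos (inner (sgn (g a)) e)\<bar> < eta"
        using d2(2)[of a b] ab close[of b] by (simp add: dist_real_def ph_def)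
    qed
    then show ?thesis by (simp add: a_def b_def)
  qed
  have ph0: "ph 0 = 0" using e st by (simp add: ph_def power2_norm_eq_inner[symmetric])
  have ph1: "ph 1 = pi" using e fi by (simp add: ph_def power2_norm_eq_inner[symmetric])
  have tm: "t 0 = 0" "t m = 1" using m0 by (simp_all add: t_def)
  have "c * pi = c * (\<Sum>i<m. ph (t (Suc i)) - ph (t i))"
    using sum_lessThan_telescope[of "\<lambda>i. ph (t i)" m] by (simp add: tm ph0 ph1)
  also have "\<dots> \<le> c * (\<Sum>i<m. \<bar>ph (t (Suc i)) - ph (t i)\<bar>)"
    using c0 by (intro mult_left_mono sum_mono) auto
  also have "\<dots> = (\<Sum>i<m. c * \<bar>ph (t (Suc i)) - ph (t i)\<bar>)" by (simp add: sum_distrib_left)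
  also have "\<dots> \<le> (\<Sum>i<m. dist (g (t (Suc i))) (g (t i)) * (INF s\<in>{t i..t (Suc i)}. 1 / bdist G (g s)))"
    using T by (intro sum_mono) auto
  finally have S: "c * pi \<le> (\<Sum>i<m. dist (g (t (Suc i))) (g (t i)) * (INF s\<in>{t i..t (Suc i)}. 1 / bdist G (g s)))" .
  have Q: "ereal (\<Sum>i<m. dist (g (t (Suc i))) (g (t i)) * (INF s\<in>{t i..t (Suc i)}. 1 / bdist G (g s)))
      \<le> qh_length G g"
    unfolding qh_length_def by (rule SUP_upper2[OF part]) simp
  have "ereal (c * pi) \<le> ereal (\<Sum>i<m. dist (g (t (Suc i))) (g (t i)) * (INF s\<in>{t i..t (Suc i)}. 1 / bdist G (g s)))"
    using S by simp
  from order_trans[OF this Q] show ?thesis by (simp add: c_def)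
qed

lemma lower_k:
  fixes e :: "'a::euclidean_space"
  assumes G: "G = - cball 0 1" and e: "norm e = 1" and r: "1 < r"
  shows "ereal pi \<le> qh_dist G (r *\<^sub>R e) (- (r *\<^sub>R e))"
  unfolding qh_dist_def
proof (rule INF_greatest)
  fix g assume "g \<in> {\<gamma>. rectifiable_curve \<gamma> \<and> path_image \<gamma> \<subseteq> G \<and>
      pathstart \<gamma> = r *\<^sub>R e \<and> pathfinish \<gamma> = - (r *\<^sub>R e)}"
  then have g: "path g" "path_image g \<subseteq> G" "g 0 = r *\<^sub>R e" "g 1 = - (r *\<^sub>R e)"
    by (auto simp: rectifiable_curve_def pathstart_def pathfinish_def)
  have se: "sgn e = e" using e by (simp add: sgn_div_norm)
  have s0: "sgn (g 0) = e" using g(3) r se by (simp add: sgn_scaleR)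
  have s1: "sgn (g 1) = - e" using g(4) r se by (simp add: sgn_scaleR sgn_minus)
  show "ereal pi \<le> qh_length G g"
    by (rule ereal_pi_limit, rule lower_length[OF G g(1,2) e s0 s1]) auto
qed

lemma ln_bound_r:
  fixes r :: real
  assumes "1 < r"
  shows "ln (1 + 2 * r / (r - 1)) \<le> ln 3 + 2 / (3 * (r - 1))"
proof -
  have eq: "1 + 2 * r / (r - 1) = 3 * (1 + 2 / (3 * (r - 1)))" using assms by (simp add: field_simps)
  have pos: "0 < 1 + 2 / (3 * (r - 1))" using assms by (simp add: add_pos_nonneg)
  have "ln (1 + 2 * r / (r - 1)) = ln 3 + ln (1 + 2 / (3 * (r - 1)))"
    unfolding eq by (rule ln_mult_pos) (use pos in auto)
  also have "ln (1 + 2 / (3 * (r - 1))) \<le> 2 / (3 * (r - 1))"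
    using assms by (intro ln_add_one_self_le_self) auto
  finally show ?thesis by simp
qed

theorem mainTheorem18:
  fixes G :: "'a::euclidean_space set"
  assumes "DIM('a) \<ge> 2"
    and "G = - cball 0 1"
  shows "uniform_domain G \<and>
         ereal (pi / ln 3) \<le> uniformity_const G \<and>
         uniformity_const G \<le> ereal (4 * pi / ln 3)"
proof -
  note DIM = assms(1) and G = assms(2)
  define S where "S = {A::real. A \<ge> 1 \<and> (\<forall>x\<in>G. \<forall>y\<in>G. qh_dist G x y \<le> ereal (A * j_dist G x y))}"
  have U: "uniformity_const G = Inf (ereal ` S)" by (simp add: uniformity_const_def S_def)
  have C1: "1 \<le> 4 * pi / ln (3::real)" using C_ge8 by linarith
  have CS: "4 * pi / ln 3 \<in> S"
    unfolding S_def using C1 upper[OF DIM G] by blast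
  have up: "uniformity_const G \<le> ereal (4 * pi / ln 3)"
    unfolding U by (rule Inf_lower) (use CS in auto)
  have lo: "ereal (pi / ln 3) \<le> uniformity_const G"
    unfolding U
  proof (rule Inf_greatest)
    fix z assume "z \<in> ereal ` S"
    then obtain A where A: "A \<in> S" "z = ereal A" by blast
    have A1: "1 \<le> A" and Ak: "\<And>x y. x \<in> G \<Longrightarrow> y \<in> G \<Longrightarrow> qh_dist G x y \<le> ereal (A * j_dist G x y)"
      using A(1) by (auto simp: S_def)
    have "pi / ln 3 \<le> A"
    proof (rule ccontr)
      assume "\<not> pi / ln 3 \<le> A"
      then have "A * ln 3 < pi" using ln3_bounds by (simp add: field_simps)
      define gap where "gap = pi - A * ln 3"
      have gap0: "0 < gap" using \<open>A * ln 3 < pi\<close> by (simp add: gap_def)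
      define r where "r = 2 + A / gap"
      have "0 \<le> A / gap" using A1 gap0 by simp
      then have r1: "1 < r" by (simp add: r_def)
      have rA: "A / gap < r - 1" by (simp add: r_def)
      obtain e :: 'a where e: "e \<in> Basis" using nonempty_Basis by blast
      have ne: "norm e = 1" using e by simp
      define x where "x = r *\<^sub>R e"
      have nx: "norm x = r" using ne r1 by (simp add: x_def)
      have xG: "x \<in> G" "- x \<in> G" using nx r1 G by auto
      have bx: "bdist G x = r - 1" "bdist G (- x) = r - 1"
        using bdist_ball[OF G, of x] bdist_ball[OF G, of "-x"] nx r1 by auto
      have "x - - x = 2 *\<^sub>R x" by (simp add: scaleR_2)
      then have dx: "dist x (- x) = 2 * r" using nx by (simp add: dist_norm)
      have j: "j_dist G x (- x) = ln (1 + 2 * r / (r - 1))" by (simp add: j_dist_def bx dx)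
      have "A * (2 / (3 * (r - 1))) < gap"
      proof -
        have "A * (2 / (3 * (r - 1))) = (2/3) * (A / (r - 1))" by (simp add: field_simps)
        also have "A / (r - 1) < gap"
          using rA gap0 r1 A1 by (simp add: field_simps)
        then have "(2/3) * (A / (r - 1)) < gap" using gap0 by linarith
        finally show ?thesis .
      qed
      moreover have "A * j_dist G x (- x) \<le> A * (ln 3 + 2 / (3 * (r - 1)))"
        unfolding j using ln_bound_r[OF r1] A1 by (intro mult_left_mono) auto
      ultimately have "A * j_dist G x (- x) < pi"
        unfolding gap_def by (simp add: distrib_left)
      moreover have "ereal pi \<le> ereal (A * j_dist G x (- x))"
        using order_trans[OF lower_k[OF G ne r1, folded x_def] Ak[OF xG]] .
      ultimately show False by simp
    qed
    then show "ereal (pi / ln 3) \<le> z" using A(2) by simp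
  qed
  have "uniform_domain G" unfolding uniform_domain_def
    by (rule le_less_trans[OF up]) simp
  then show ?thesis using up lo by simp
qed

end
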